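(* Let $\varepsilon_0>0$, $\delta_1\in(0,1)$, and suppose $\mathcal{A}:\mathcal{D}\to\mathcal{S}$ is an $(\varepsilon_0,\delta_0)$-DP local randomizer with $$\delta_0\le \frac{(1-e^{-\varepsilon_0})\delta_1}{4e^{\varepsilon_0}\left(2+\frac{\ln(2/\delta_1)}{\ln(1/(1-e^{-5\varepsilon_0}))}\right)}.$$ Then there exists an $8\varepsilon_0$-DP local randomizer $\tilde{\mathcal{A}}:\mathcal{D}\to\mathcal{S}$ such that for every $d\in\mathcal{D}$, the total variation distance between the output distributions of $\mathcal{A}(d)$ and $\tilde{\mathcal{A}}(d)$ is at most $\delta_1$.
   Context: A randomized map $\mathcal{A}:\mathcal{D}\to\mathcal{S}$ is an $(\varepsilon_0,\delta_0)$-DP local randomizer if for all $d,d'\in\mathcal{D}$ and measurable $S\subseteq\mathcal{S}$, $\Pr[\mathcal{A}(d)\in S]\le e^{\varepsilon_0}\Pr[\mathcal{A}(d')\in S]+\delta_0$; it is $\varepsilon_0$-DP if this holds with $\delta_0=0$. *)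

theory Defs
  imports "HOL-Probability.Probability"
begin

text \<open>A randomized map from data domain D to output space (measurable space) \<Omega> is
modelled as a family of probability measures A d on \<Omega>, one for each d in D.\<close>

definition dp_local_randomizer ::
  "'a set \<Rightarrow> 'b measure \<Rightarrow> ('a \<Rightarrow> 'b measure) \<Rightarrow> real \<Rightarrow> real \<Rightarrow> bool" where
  "dp_local_randomizer D \<Omega> A \<epsilon> \<delta> \<longleftrightarrow>
     (\<forall>d\<in>D. prob_space (A d) \<and> sets (A d) = sets \<Omega>) \<and>
     (\<forall>d\<in>D. \<forall>d'\<in>D. \<forall>S\<in>sets \<Omega>.
        measure (A d) S \<le> exp \<epsilon> * measure (A d') S + \<delta>)"

abbreviation pure_dp_local_randomizer ::
  "'a set \<Rightarrow> 'b measure \<Rightarrow> ('a \<Rightarrow> 'b measure) \<Rightarrow> real \<Rightarrow> bool" where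
  "pure_dp_local_randomizer D \<Omega> A \<epsilon> \<equiv> dp_local_randomizer D \<Omega> A \<epsilon> 0"

definition tv_dist :: "'b measure \<Rightarrow> 'b measure \<Rightarrow> 'b measure \<Rightarrow> real" where
  "tv_dist \<Omega> P Q = (SUP S\<in>sets \<Omega>. \<bar>measure P S - measure Q S\<bar>)"

end

theory Submission imports Defs begin

lemma sum_measure_ex:
  fixes \<Omega> P Q :: "'b measure"
  assumes "finite_measure P" "finite_measure Q" "sets P = sets \<Omega>" "sets Q = sets \<Omega>"
  shows "\<exists>\<mu>. finite_measure \<mu> \<and> sets \<mu> = sets \<Omega> \<and> (\<forall>S\<in>sets \<Omega>. emeasure \<mu> S = emeasure P S + emeasure Q S)"
proof -
  define m where "m = (\<lambda>S. emeasure P S + emeasure Q S)"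
  define \<mu> where "\<mu> = measure_of (space \<Omega>) (sets \<Omega>) m"
  have sa: "sigma_algebra (space \<Omega>) (sets \<Omega>)" by (rule sets.sigma_algebra_axioms)
  have pos: "positive (sets \<Omega>) m" unfolding positive_def m_def by simp
  have ca: "countably_additive (sets \<Omega>) m"
    unfolding countably_additive_def
  proof (intro allI impI)
    fix A :: "nat \<Rightarrow> 'b set"
    assume A: "range A \<subseteq> sets \<Omega>" "disjoint_family A" "\<Union> (range A) \<in> sets \<Omega>"
    have "(\<Sum>i. m (A i)) = (\<Sum>i. emeasure P (A i)) + (\<Sum>i. emeasure Q (A i))"
      unfolding m_def by (simp add: suminf_add)
    also have "\<dots> = m (\<Union> (range A))"
      unfolding m_def using A assms
      by (simp add: suminf_emeasure)
    finally show "(\<Sum>i. m (A i)) = m (\<Union> (range A))" .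
  qed
  have em: "\<forall>S\<in>sets \<Omega>. emeasure \<mu> S = m S"
    using emeasure_measure_of_sigma[OF sa pos ca] unfolding \<mu>_def by blast
  have sets: "sets \<mu> = sets \<Omega>" unfolding \<mu>_def using sa by (simp add: sigma_algebra.sets_measure_of_eq)
  have sp: "space \<mu> = space \<Omega>" unfolding \<mu>_def by simp
  have "emeasure \<mu> (space \<mu>) \<noteq> \<infinity>"
    using em sp assms unfolding m_def
    by (metis ennreal_add_eq_top finite_measure.emeasure_finite infinity_ennreal_def sets.top)
  hence "finite_measure \<mu>" by (rule finite_measureI)
  with sets em show ?thesis unfolding m_def by blast
qed


lemma clip_ex:
  fixes \<Omega> P Q :: "'b measure" and \<epsilon> \<delta> :: real
  assumes PP: "prob_space P" and QP: "prob_space Q" and sP: "sets P = sets \<Omega>" and sQ: "sets Q = sets \<Omega>"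
    and eps: "\<epsilon> \<ge> 0" and del: "\<delta> \<ge> 0"
    and DP1: "\<forall>S\<in>sets \<Omega>. measure P S \<le> exp \<epsilon> * measure Q S + \<delta>"
    and DP2: "\<forall>S\<in>sets \<Omega>. measure Q S \<le> exp \<epsilon> * measure P S + \<delta>"
  shows "\<exists>C. finite_measure C \<and> sets C = sets \<Omega> \<and>
     (\<forall>S\<in>sets \<Omega>. exp (-\<epsilon>) * measure Q S \<le> measure C S \<and> measure C S \<le> exp \<epsilon> * measure Q S
        \<and> measure C S \<le> measure P S + \<delta> \<and> measure P S \<le> measure C S + \<delta>)"
proof -
  interpret P: prob_space P by (rule PP)
  interpret Q: prob_space Q by (rule QP)
  obtain \<mu> where fm: "finite_measure \<mu>" and s\<mu>: "sets \<mu> = sets \<Omega>"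
     and em: "\<forall>S\<in>sets \<Omega>. emeasure \<mu> S = emeasure P S + emeasure Q S"
    using sum_measure_ex[of P Q \<Omega>] sP sQ P.finite_measure_axioms Q.finite_measure_axioms by blast
  interpret \<mu>: finite_measure \<mu> by (rule fm)
  have acP: "absolutely_continuous \<mu> P"
    unfolding absolutely_continuous_def
  proof
    fix N assume "N \<in> null_sets \<mu>"
    then have "N \<in> sets \<Omega>" "emeasure \<mu> N = 0" using s\<mu> by auto
    then have "emeasure P N = 0" using em by auto
    then show "N \<in> null_sets P" using \<open>N \<in> sets \<Omega>\<close> sP by auto
  qed
  have acQ: "absolutely_continuous \<mu> Q"
    unfolding absolutely_continuous_def
  proof
    fix N assume "N \<in> null_sets \<mu>"
    then have "N \<in> sets \<Omega>" "emeasure \<mu> N = 0" using s\<mu> by auto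
    then have "emeasure Q N = 0" using em by auto
    then show "N \<in> null_sets Q" using \<open>N \<in> sets \<Omega>\<close> sQ by auto
  qed
  obtain f where fm[measurable]: "f \<in> borel_measurable \<mu>" and fP: "density \<mu> f = P"
    using \<mu>.Radon_Nikodym[OF acP] sP s\<mu> by auto
  obtain g where gm[measurable]: "g \<in> borel_measurable \<mu>" and gQ: "density \<mu> g = Q"
    using \<mu>.Radon_Nikodym[OF acQ] sQ s\<mu> by auto
  define e where "e = ennreal (exp \<epsilon>)"
  define e' where "e' = ennreal (exp (-\<epsilon>))"
  have ee: "e' \<le> e" unfolding e_def e'_def using eps by (simp add: ennreal_leI)
  have ee2: "\<And>y. e' * y \<le> e * y" using ee by (simp add: mult_right_mono)
  define c where "c = (\<lambda>x. max (e' * g x) (min (f x) (e * g x)))"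
  have cm[measurable]: "c \<in> borel_measurable \<mu>" unfolding c_def by measurable
  define C where "C = density \<mu> c"
  have sC: "sets C = sets \<Omega>" unfolding C_def using s\<mu> by simp
  have eC: "emeasure C S = (\<integral>\<^sup>+ x. c x * indicator S x \<partial>\<mu>)" if "S \<in> sets \<Omega>" for S
    unfolding C_def using that s\<mu> by (simp add: emeasure_density)
  have eP: "emeasure P S = (\<integral>\<^sup>+ x. f x * indicator S x \<partial>\<mu>)" if "S \<in> sets \<Omega>" for S
    unfolding fP[symmetric] using that s\<mu> by (simp add: emeasure_density)
  have eQ: "emeasure Q S = (\<integral>\<^sup>+ x. g x * indicator S x \<partial>\<mu>)" if "S \<in> sets \<Omega>" for S
    unfolding gQ[symmetric] using that s\<mu> by (simp add: emeasure_density)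
  have cup: "c x \<le> e * g x" for x unfolding c_def using ee2[of "g x"] by auto
  have clo: "e' * g x \<le> c x" for x unfolding c_def by auto
  have Cup: "emeasure C S \<le> e * emeasure Q S" if S: "S \<in> sets \<Omega>" for S
  proof -
    have "emeasure C S \<le> (\<integral>\<^sup>+ x. e * (g x * indicator S x) \<partial>\<mu>)"
      unfolding eC[OF S] by (rule nn_integral_mono) (simp add: cup mult_right_mono mult.assoc[symmetric])
    also have "\<dots> = e * emeasure Q S" using S s\<mu> eQ[OF S] by (simp add: nn_integral_cmult)
    finally show ?thesis .
  qed
  have Clo: "e' * emeasure Q S \<le> emeasure C S" if S: "S \<in> sets \<Omega>" for S
  proof -
    have "e' * emeasure Q S = (\<integral>\<^sup>+ x. e' * (g x * indicator S x) \<partial>\<mu>)"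
      using S s\<mu> eQ[OF S] by (simp add: nn_integral_cmult)
    also have "\<dots> \<le> emeasure C S"
      unfolding eC[OF S] by (rule nn_integral_mono) (simp add: clo mult_right_mono mult.assoc[symmetric])
    finally show ?thesis .
  qed
  have Cfin: "emeasure C (space C) \<noteq> \<infinity>"
  proof -
    have "space C = space \<Omega>" using sC by (rule sets_eq_imp_space_eq)
    then have "emeasure C (space C) \<le> e * emeasure Q (space \<Omega>)" using Cup by simp
    also have "\<dots> = e" using sets_eq_imp_space_eq[OF sQ] Q.emeasure_space_1 by simp
    also have "\<dots> < \<infinity>" unfolding e_def by simp
    finally show ?thesis by simp
  qed
  have CF: "finite_measure C" by (rule finite_measureI[OF Cfin])
  interpret C: finite_measure C by (rule CF)
  have conv: "\<And>M S. finite_measure M \<Longrightarrow> emeasure M S = ennreal (measure M S)"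
    by (simp add: finite_measure.emeasure_eq_measure)
  have PC: "emeasure P S \<le> emeasure C S + ennreal \<delta>" if S: "S \<in> sets \<Omega>" for S
  proof -
    define T where "T = {x \<in> space \<mu>. e * g x < f x}"
    have T[measurable]: "T \<in> sets \<Omega>" unfolding T_def s\<mu>[symmetric] by measurable
    have ST: "S \<inter> T \<in> sets \<Omega>" "S - T \<in> sets \<Omega>" using S T by auto
    have disj: "S \<inter> T \<inter> (S - T) = {}" by blast
    have eqP: "emeasure P S = emeasure P (S \<inter> T) + emeasure P (S - T)"
      using plus_emeasure[of "S \<inter> T" P "S - T", OF _ _ disj] ST sP by (simp add: Int_Diff_Un)
    have 1: "emeasure P (S \<inter> T) \<le> e * emeasure Q (S \<inter> T) + ennreal \<delta>"
    proof -
      have "measure P (S \<inter> T) \<le> exp \<epsilon> * measure Q (S \<inter> T) + \<delta>" using DP1 ST by blast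
      then show ?thesis unfolding e_def using conv[OF P.finite_measure_axioms] conv[OF Q.finite_measure_axioms] del
        by (metis ennreal_leI ennreal_mult ennreal_plus exp_ge_zero measure_nonneg mult_nonneg_nonneg)
    qed
    have 2: "e * emeasure Q (S \<inter> T) = emeasure C (S \<inter> T)"
    proof -
      have "e * emeasure Q (S \<inter> T) = (\<integral>\<^sup>+ x. e * (g x * indicator (S \<inter> T) x) \<partial>\<mu>)"
        using ST s\<mu> eQ by (simp add: nn_integral_cmult)
      also have "\<dots> = emeasure C (S \<inter> T)"
        unfolding eC[OF ST(1)]
      proof (rule nn_integral_cong)
        fix x assume "x \<in> space \<mu>"
        show "e * (g x * indicator (S \<inter> T) x) = c x * indicator (S \<inter> T) x"
        proof (cases "x \<in> T")
          case True
          then have "e * g x < f x" unfolding T_def by auto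
          then have "c x = e * g x" unfolding c_def using ee2[of "g x"] by (auto simp: max_def min_def)
          then show ?thesis by (simp add: mult.assoc)
        qed (simp)
      qed
      finally show ?thesis .
    qed
    have 3: "emeasure P (S - T) \<le> emeasure C (S - T)"
      unfolding eP[OF ST(2)] eC[OF ST(2)]
    proof (rule nn_integral_mono)
      fix x assume "x \<in> space \<mu>"
      show "f x * indicator (S - T) x \<le> c x * indicator (S - T) x"
      proof (cases "x \<in> T")
        case False
        then have "f x \<le> e * g x" using \<open>x \<in> space \<mu>\<close> unfolding T_def by (auto simp: not_less)
        then have "f x \<le> c x" unfolding c_def by auto
        then show ?thesis by (simp add: mult_right_mono)
      qed simp
    qed
    have "emeasure C S = emeasure C (S \<inter> T) + emeasure C (S - T)"
      using plus_emeasure[of "S \<inter> T" C "S - T", OF _ _ disj] ST sC by (simp add: Int_Diff_Un)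
    note eqC = this
    have "emeasure P S \<le> (e * emeasure Q (S \<inter> T) + ennreal \<delta>) + emeasure C (S - T)"
      unfolding eqP using 1 3 by (rule add_mono)
    also have "\<dots> = emeasure C S + ennreal \<delta>" unfolding eqC 2 by (simp add: ac_simps)
    finally show ?thesis .
  qed
  have CP: "emeasure C S \<le> emeasure P S + ennreal \<delta>" if S: "S \<in> sets \<Omega>" for S
  proof -
    define T where "T = {x \<in> space \<mu>. f x < e' * g x}"
    have T[measurable]: "T \<in> sets \<Omega>" unfolding T_def s\<mu>[symmetric] by measurable
    have ST: "S \<inter> T \<in> sets \<Omega>" "S - T \<in> sets \<Omega>" using S T by auto
    have disj: "S \<inter> T \<inter> (S - T) = {}" by blast
    have eqP: "emeasure P S = emeasure P (S \<inter> T) + emeasure P (S - T)"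
      using plus_emeasure[of "S \<inter> T" P "S - T", OF _ _ disj] ST sP by (simp add: Int_Diff_Un)
    have 1: "e' * emeasure Q (S \<inter> T) \<le> emeasure P (S \<inter> T) + ennreal \<delta>"
    proof -
      have "measure Q (S \<inter> T) \<le> exp \<epsilon> * measure P (S \<inter> T) + \<delta>" using DP2 ST by blast
      then have "exp (-\<epsilon>) * measure Q (S \<inter> T) \<le> exp (-\<epsilon>) * (exp \<epsilon> * measure P (S \<inter> T) + \<delta>)"
        by (simp add: mult_left_mono)
      also have "\<dots> = measure P (S \<inter> T) + exp (-\<epsilon>) * \<delta>"
        by (simp add: distrib_left mult.assoc[symmetric] exp_add[symmetric])
      also have "\<dots> \<le> measure P (S \<inter> T) + \<delta>" using eps del
        by (simp add: mult_left_le_one_le)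
      finally have r: "exp (-\<epsilon>) * measure Q (S \<inter> T) \<le> measure P (S \<inter> T) + \<delta>" .
      show ?thesis unfolding e'_def using conv[OF P.finite_measure_axioms] conv[OF Q.finite_measure_axioms] del r
        by (metis ennreal_leI ennreal_mult ennreal_plus exp_ge_zero measure_nonneg mult_nonneg_nonneg)
    qed
    have 2: "e' * emeasure Q (S \<inter> T) = emeasure C (S \<inter> T)"
    proof -
      have "e' * emeasure Q (S \<inter> T) = (\<integral>\<^sup>+ x. e' * (g x * indicator (S \<inter> T) x) \<partial>\<mu>)"
        using ST s\<mu> eQ by (simp add: nn_integral_cmult)
      also have "\<dots> = emeasure C (S \<inter> T)"
        unfolding eC[OF ST(1)]
      proof (rule nn_integral_cong)
        fix x assume "x \<in> space \<mu>"
        show "e' * (g x * indicator (S \<inter> T) x) = c x * indicator (S \<inter> T) x"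
        proof (cases "x \<in> T")
          case True
          then have "f x < e' * g x" unfolding T_def by auto
          then have "c x = e' * g x" unfolding c_def using ee2[of "g x"] by (auto simp: max_def min_def)
          then show ?thesis by (simp add: mult.assoc)
        qed (simp)
      qed
      finally show ?thesis .
    qed
    have 3: "emeasure C (S - T) \<le> emeasure P (S - T)"
      unfolding eP[OF ST(2)] eC[OF ST(2)]
    proof (rule nn_integral_mono)
      fix x assume "x \<in> space \<mu>"
      show "c x * indicator (S - T) x \<le> f x * indicator (S - T) x"
      proof (cases "x \<in> T")
        case False
        then have "e' * g x \<le> f x" using \<open>x \<in> space \<mu>\<close> unfolding T_def by (auto simp: not_less)
        then have "c x \<le> f x" unfolding c_def by auto
        then show ?thesis by (simp add: mult_right_mono)
      qed simp
    qed
    have "emeasure C S = emeasure C (S \<inter> T) + emeasure C (S - T)"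
      using plus_emeasure[of "S \<inter> T" C "S - T", OF _ _ disj] ST sC by (simp add: Int_Diff_Un)
    note eqC = this
    have "emeasure C S \<le> (emeasure P (S \<inter> T) + ennreal \<delta>) + emeasure P (S - T)"
      unfolding eqC 2[symmetric] using 1 3 by (rule add_mono)
    also have "\<dots> = emeasure P S + ennreal \<delta>" unfolding eqP by (simp add: ac_simps)
    finally show ?thesis .
  qed
  have final: "exp (-\<epsilon>) * measure Q S \<le> measure C S \<and> measure C S \<le> exp \<epsilon> * measure Q S
        \<and> measure C S \<le> measure P S + \<delta> \<and> measure P S \<le> measure C S + \<delta>" if S: "S \<in> sets \<Omega>" for S
  proof -
    note cC = conv[OF CF, of S] and cP = conv[OF P.finite_measure_axioms, of S]
      and cQ = conv[OF Q.finite_measure_axioms, of S]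
    have a: "exp (-\<epsilon>) * measure Q S \<le> measure C S"
      using Clo[OF S] unfolding cC cQ e'_def
      by (simp add: ennreal_mult[symmetric])
    have b: "measure C S \<le> exp \<epsilon> * measure Q S"
      using Cup[OF S] unfolding cC cQ e_def
      by (simp add: ennreal_mult[symmetric])
    have "ennreal (measure C S) \<le> ennreal (measure P S + \<delta>)"
      using CP[OF S] del unfolding cC cP by (simp add: ennreal_plus)
    then have c: "measure C S \<le> measure P S + \<delta>"
      by (rule iffD1[OF ennreal_le_iff, rotated]) (simp add: del)
    have "ennreal (measure P S) \<le> ennreal (measure C S + \<delta>)"
      using PC[OF S] del unfolding cC cP by (simp add: ennreal_plus)
    then have d: "measure P S \<le> measure C S + \<delta>"
      by (rule iffD1[OF ennreal_le_iff, rotated]) (simp add: del)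
    show ?thesis using a b c d by blast
  qed
  show ?thesis using CF sC final by blast
qed


lemma scaled_measure:
  assumes "finite_measure C" "S \<in> sets C" "k \<ge> 0"
  shows "emeasure (density C (\<lambda>_. ennreal k)) S = ennreal (k * measure C S)"
    and "measure (density C (\<lambda>_. ennreal k)) S = k * measure C S"
proof -
  show e: "emeasure (density C (\<lambda>_. ennreal k)) S = ennreal (k * measure C S)"
    using assms by (simp add: emeasure_density nn_integral_cmult_indicator
        finite_measure.emeasure_eq_measure ennreal_mult)
  show "measure (density C (\<lambda>_. ennreal k)) S = k * measure C S"
    unfolding measure_def e using assms by simp
qed

lemma numeric:
  fixes \<epsilon>\<^sub>0 \<delta>\<^sub>0 \<delta>\<^sub>1 :: real
  assumes "\<epsilon>\<^sub>0 > 0" and "0 < \<delta>\<^sub>1" and "\<delta>\<^sub>1 < 1"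
    and "\<delta>\<^sub>0 \<le> (1 - exp (- \<epsilon>\<^sub>0)) * \<delta>\<^sub>1 /
           (4 * exp \<epsilon>\<^sub>0 * (2 + ln (2 / \<delta>\<^sub>1) / ln (1 / (1 - exp (- 5 * \<epsilon>\<^sub>0)))))"
  shows "\<delta>\<^sub>0 \<le> (1 - exp (- \<epsilon>\<^sub>0)) / 8" "4 * \<delta>\<^sub>0 \<le> \<delta>\<^sub>1"
proof -
  define x where "x = 1 - exp (- \<epsilon>\<^sub>0)"
  have x0: "0 < x" "x < 1" unfolding x_def using assms(1) by auto
  have l1: "ln (2 / \<delta>\<^sub>1) > 0" using assms by (simp add: ln_gt_zero_iff)
  have e5: "0 < exp (- 5 * \<epsilon>\<^sub>0)" "exp (- 5 * \<epsilon>\<^sub>0) < 1" using assms(1) by auto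
  have l2: "ln (1 / (1 - exp (- 5 * \<epsilon>\<^sub>0))) > 0" using e5
    by (subst ln_gt_zero_iff) (auto simp: field_simps)
  define L where "L = ln (2 / \<delta>\<^sub>1) / ln (1 / (1 - exp (- 5 * \<epsilon>\<^sub>0)))"
  have L0: "L \<ge> 0" unfolding L_def using l1 l2 by simp
  have E: "exp \<epsilon>\<^sub>0 \<ge> 1" using assms(1) by simp
  have "\<delta>\<^sub>0 \<le> x * \<delta>\<^sub>1 / (4 * exp \<epsilon>\<^sub>0 * (2 + L))" using assms(4) unfolding x_def L_def .
  also have "\<dots> \<le> x * \<delta>\<^sub>1 / (8 * exp \<epsilon>\<^sub>0)"
    by (rule divide_left_mono) (use x0 assms L0 in \<open>auto intro!: mult_pos_pos\<close>)
  finally have h: "\<delta>\<^sub>0 \<le> x * \<delta>\<^sub>1 / (8 * exp \<epsilon>\<^sub>0)" .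
  have "x * \<delta>\<^sub>1 / (8 * exp \<epsilon>\<^sub>0) \<le> x * \<delta>\<^sub>1 / 8"
    using x0 assms E by (intro divide_left_mono) auto
  also have "\<dots> \<le> x / 8" using x0 assms by (simp add: mult_left_le)
  finally show "\<delta>\<^sub>0 \<le> (1 - exp (- \<epsilon>\<^sub>0)) / 8" using h unfolding x_def by linarith
  have "x * \<delta>\<^sub>1 / 8 \<le> \<delta>\<^sub>1 / 8" using x0 assms by (simp add: mult_left_le_one_le)
  then show "4 * \<delta>\<^sub>0 \<le> \<delta>\<^sub>1" using h \<open>x * \<delta>\<^sub>1 / (8 * exp \<epsilon>\<^sub>0) \<le> x * \<delta>\<^sub>1 / 8\<close> assms by linarith
qed


theorem mainTheorem9:
  fixes D :: "'a set" and \<Omega> :: "'b measure" and A :: "'a \<Rightarrow> 'b measure"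
    and \<epsilon>\<^sub>0 \<delta>\<^sub>0 \<delta>\<^sub>1 :: real
  assumes "\<epsilon>\<^sub>0 > 0" and "0 < \<delta>\<^sub>1" and "\<delta>\<^sub>1 < 1"
    and "dp_local_randomizer D \<Omega> A \<epsilon>\<^sub>0 \<delta>\<^sub>0"
    and "\<delta>\<^sub>0 \<le> (1 - exp (- \<epsilon>\<^sub>0)) * \<delta>\<^sub>1 /
           (4 * exp \<epsilon>\<^sub>0 * (2 + ln (2 / \<delta>\<^sub>1) / ln (1 / (1 - exp (- 5 * \<epsilon>\<^sub>0)))))"
  shows "\<exists>A'. pure_dp_local_randomizer D \<Omega> A' (8 * \<epsilon>\<^sub>0) \<and>
              (\<forall>d\<in>D. tv_dist \<Omega> (A d) (A' d) \<le> \<delta>\<^sub>1)"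
proof (cases "D = {}")
  case True
  then show ?thesis unfolding dp_local_randomizer_def by auto
next
  case False
  then obtain d0 where d0: "d0 \<in> D" by blast
  note N = numeric[OF assms(1,2,3,5)]
  have H1: "\<forall>d\<in>D. prob_space (A d) \<and> sets (A d) = sets \<Omega>"
    and H2: "\<forall>d\<in>D. \<forall>d'\<in>D. \<forall>S\<in>sets \<Omega>. measure (A d) S \<le> exp \<epsilon>\<^sub>0 * measure (A d') S + \<delta>\<^sub>0"
    using assms(4) unfolding dp_local_randomizer_def by auto
  have del: "\<delta>\<^sub>0 \<ge> 0"
  proof -
    have "measure (A d0) {} \<le> exp \<epsilon>\<^sub>0 * measure (A d0) {} + \<delta>\<^sub>0" using H2 d0 by blast
    then show ?thesis by simp
  qed
  define x where "x = 1 - exp (- \<epsilon>\<^sub>0)"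
  have x0: "0 < x" "x < 1" unfolding x_def using assms(1) by auto
  have dx: "\<delta>\<^sub>0 \<le> x / 8" using N(1) unfolding x_def .
  have "\<forall>d\<in>D. \<exists>C. finite_measure C \<and> sets C = sets \<Omega> \<and>
     (\<forall>S\<in>sets \<Omega>. exp (-\<epsilon>\<^sub>0) * measure (A d0) S \<le> measure C S \<and> measure C S \<le> exp \<epsilon>\<^sub>0 * measure (A d0) S
        \<and> measure C S \<le> measure (A d) S + \<delta>\<^sub>0 \<and> measure (A d) S \<le> measure C S + \<delta>\<^sub>0)"
    apply (intro ballI)
    subgoal for d
      using clip_ex[of "A d" "A d0" \<Omega> \<epsilon>\<^sub>0 \<delta>\<^sub>0] H1 H2 d0 del assms(1) by auto
    done
  then obtain C where C: "\<And>d. d \<in> D \<Longrightarrow> finite_measure (C d) \<and> sets (C d) = sets \<Omega> \<and>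
     (\<forall>S\<in>sets \<Omega>. exp (-\<epsilon>\<^sub>0) * measure (A d0) S \<le> measure (C d) S \<and> measure (C d) S \<le> exp \<epsilon>\<^sub>0 * measure (A d0) S
        \<and> measure (C d) S \<le> measure (A d) S + \<delta>\<^sub>0 \<and> measure (A d) S \<le> measure (C d) S + \<delta>\<^sub>0)"
    by metis
  have Cineq: "exp (-\<epsilon>\<^sub>0) * measure (A d0) S \<le> measure (C d) S \<and> measure (C d) S \<le> exp \<epsilon>\<^sub>0 * measure (A d0) S
        \<and> measure (C d) S \<le> measure (A d) S + \<delta>\<^sub>0 \<and> measure (A d) S \<le> measure (C d) S + \<delta>\<^sub>0"
    if d: "d \<in> D" and S: "S \<in> sets \<Omega>" for d S
    using C[OF d] S by blast
  define Z where "Z = (\<lambda>d. measure (C d) (space \<Omega>))"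
  define A' where "A' = (\<lambda>d. density (C d) (\<lambda>_. ennreal (1 / Z d)))"
  have Zb: "\<bar>Z d - 1\<bar> \<le> \<delta>\<^sub>0" if d: "d \<in> D" for d
  proof -
    have "measure (A d) (space \<Omega>) = 1"
      using H1 d prob_space.prob_space sets_eq_imp_space_eq by metis
    then show ?thesis using C[OF d] unfolding Z_def by force
  qed
  have Zpos: "Z d > 0" if "d \<in> D" for d using Zb[OF that] dx x0 by linarith
  have sA': "sets (A' d) = sets \<Omega>" if "d \<in> D" for d unfolding A'_def using C[OF that] by simp
  have mA': "measure (A' d) S = (1 / Z d) * measure (C d) S" if d: "d \<in> D" and S: "S \<in> sets \<Omega>" for d S
    unfolding A'_def using scaled_measure(2)[of "C d" S "1 / Z d"] C[OF d] S Zpos[OF d] by simp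
  have pA': "prob_space (A' d)" if d: "d \<in> D" for d
  proof (rule prob_spaceI)
    have sp: "space (A' d) = space \<Omega>" using sA'[OF d] by (rule sets_eq_imp_space_eq)
    have "emeasure (A' d) (space \<Omega>) = ennreal ((1 / Z d) * measure (C d) (space \<Omega>))"
      unfolding A'_def using scaled_measure(1)[of "C d" "space \<Omega>" "1 / Z d"] C[OF d] Zpos[OF d] by simp
    also have "\<dots> = 1" using Zpos[OF d] unfolding Z_def by simp
    finally show "emeasure (A' d) (space (A' d)) = 1" using sp by simp
  qed
  have Cmono: "measure (C d) S \<le> Z d" if d: "d \<in> D" and S: "S \<in> sets \<Omega>" for d S
    unfolding Z_def using C[OF d] S
    by (metis finite_measure.bounded_measure sets_eq_imp_space_eq)
  have Zratio: "Z d' \<le> exp (6 * \<epsilon>\<^sub>0) * Z d" if "d \<in> D" "d' \<in> D" for d d'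
  proof -
    have a: "Z d' \<le> 1 + x / 8" "1 - x / 8 \<le> Z d" using Zb[OF that(1)] Zb[OF that(2)] dx by auto
    have e1: "exp \<epsilon>\<^sub>0 * (1 - x) = 1" unfolding x_def by (simp add: algebra_simps exp_minus)
    have e6: "exp \<epsilon>\<^sub>0 \<le> exp (6 * \<epsilon>\<^sub>0)" using assms(1) by simp
    have "1 + x / 8 \<le> exp \<epsilon>\<^sub>0 * (1 - x / 8)"
    proof -
      have "(1 + x / 8) * (1 - x) \<le> 1 - x / 8" using x0 by (simp add: algebra_simps)
      then have "exp \<epsilon>\<^sub>0 * ((1 + x / 8) * (1 - x)) \<le> exp \<epsilon>\<^sub>0 * (1 - x / 8)" by simp
      moreover have "exp \<epsilon>\<^sub>0 * ((1 + x / 8) * (1 - x)) = (1 + x / 8) * (exp \<epsilon>\<^sub>0 * (1 - x))"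
        by (simp only: ac_simps)
      ultimately show ?thesis using e1 by simp
    qed
    also have "\<dots> \<le> exp (6 * \<epsilon>\<^sub>0) * Z d" using e6 a x0
      by (intro mult_mono) auto
    finally show ?thesis using a by linarith
  qed
  have DP: "measure (A' d) S \<le> exp (8 * \<epsilon>\<^sub>0) * measure (A' d') S + 0"
    if d: "d \<in> D" and d': "d' \<in> D" and S: "S \<in> sets \<Omega>" for d d' S
  proof -
    define a where "a = measure (C d) S"
    define b where "b = measure (C d') S"
    define q where "q = measure (A d0) S"
    have ab: "a \<le> exp \<epsilon>\<^sub>0 * q" "exp (-\<epsilon>\<^sub>0) * q \<le> b" using Cineq[OF d S] Cineq[OF d' S]
      unfolding a_def b_def q_def by blast+
    have q0: "q \<ge> 0" unfolding q_def by simp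
    have qb: "q \<le> exp \<epsilon>\<^sub>0 * b"
    proof -
      have "exp \<epsilon>\<^sub>0 * (exp (-\<epsilon>\<^sub>0) * q) \<le> exp \<epsilon>\<^sub>0 * b" using ab by simp
      then show ?thesis by (simp add: mult.assoc[symmetric] exp_add[symmetric])
    qed
    have "exp \<epsilon>\<^sub>0 * q \<le> exp \<epsilon>\<^sub>0 * (exp \<epsilon>\<^sub>0 * b)"
      by (rule mult_left_mono[OF qb]) simp
    with ab(1) have "a \<le> exp \<epsilon>\<^sub>0 * (exp \<epsilon>\<^sub>0 * b)" by (rule order_trans)
    moreover have e2: "exp (2 * \<epsilon>\<^sub>0) = exp \<epsilon>\<^sub>0 * exp \<epsilon>\<^sub>0" using exp_add[of "\<epsilon>\<^sub>0" "\<epsilon>\<^sub>0"] by (simp only: mult_2)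
    ultimately have ab2: "a \<le> exp (2 * \<epsilon>\<^sub>0) * b" by (simp only: e2 mult.assoc)
    have b0: "b \<ge> 0" unfolding b_def by simp
    have "a * Z d' \<le> exp (2 * \<epsilon>\<^sub>0) * b * Z d'" by (rule mult_right_mono[OF ab2]) (use Zpos[OF d'] in simp)
    also have "\<dots> \<le> exp (2 * \<epsilon>\<^sub>0) * b * (exp (6 * \<epsilon>\<^sub>0) * Z d)"
      by (rule mult_left_mono[OF Zratio[OF d d']]) (use b0 in simp)
    also have "\<dots> = exp (8 * \<epsilon>\<^sub>0) * b * Z d"
    proof -
      have E8: "exp (8 * \<epsilon>\<^sub>0) = exp (2 * \<epsilon>\<^sub>0) * exp (6 * \<epsilon>\<^sub>0)"
        using exp_add[of "2 * \<epsilon>\<^sub>0" "6 * \<epsilon>\<^sub>0"] by simp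
      show ?thesis unfolding E8 by (simp only: ac_simps)
    qed
    finally have "a * Z d' \<le> exp (8 * \<epsilon>\<^sub>0) * b * Z d" .
    then have "a * Z d' / (Z d * Z d') \<le> exp (8 * \<epsilon>\<^sub>0) * b * Z d / (Z d * Z d')"
      using Zpos[OF d] Zpos[OF d'] by (intro divide_right_mono) auto
    moreover have "a * Z d' / (Z d * Z d') = a / Z d" using Zpos[OF d'] by simp
    moreover have "exp (8 * \<epsilon>\<^sub>0) * b * Z d / (Z d * Z d') = exp (8 * \<epsilon>\<^sub>0) * (b / Z d')"
      using Zpos[OF d] by simp
    ultimately have "a / Z d \<le> exp (8 * \<epsilon>\<^sub>0) * (b / Z d')" by simp
    then show ?thesis using mA'[OF d S] mA'[OF d' S] unfolding a_def b_def by simp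
  qed
  have TV: "tv_dist \<Omega> (A d) (A' d) \<le> \<delta>\<^sub>1" if d: "d \<in> D" for d
    unfolding tv_dist_def
  proof (rule cSUP_least)
    show "sets \<Omega> \<noteq> {}" by auto
    fix S assume S: "S \<in> sets \<Omega>"
    define a where "a = measure (C d) S"
    define p where "p = measure (A d) S"
    have ap1: "a \<le> p + \<delta>\<^sub>0" "p \<le> a + \<delta>\<^sub>0" using Cineq[OF d S] unfolding a_def p_def by blast+
    then have ap: "\<bar>a - p\<bar> \<le> \<delta>\<^sub>0" by linarith
    have a0: "0 \<le> a" "a \<le> Z d" using Cmono[OF d S] unfolding a_def by auto
    have Zp: "Z d > 0" by (rule Zpos[OF d])
    have "a / Z d - a = (a / Z d) * (1 - Z d)" using Zp by (simp add: field_simps)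
    then have "\<bar>a / Z d - a\<bar> = (a / Z d) * \<bar>1 - Z d\<bar>" using Zp a0 by (simp add: abs_mult)
    also have "\<dots> \<le> 1 * \<bar>1 - Z d\<bar>"
      by (rule mult_right_mono) (use Zp a0 in auto)
    also have "\<dots> = \<bar>1 - Z d\<bar>" by simp
    finally have "\<bar>a / Z d - a\<bar> \<le> \<delta>\<^sub>0" using Zb[OF d] by linarith
    then have "\<bar>p - a / Z d\<bar> \<le> 2 * \<delta>\<^sub>0" using ap by linarith
    moreover have "measure (A' d) S = a / Z d" using mA'[OF d S] unfolding a_def by simp
    ultimately show "\<bar>measure (A d) S - measure (A' d) S\<bar> \<le> \<delta>\<^sub>1"
      using N(2) del unfolding p_def by linarith
  qed
  have "pure_dp_local_randomizer D \<Omega> A' (8 * \<epsilon>\<^sub>0)"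
    unfolding dp_local_randomizer_def using pA' sA' DP by blast
  then show ?thesis using TV by blast
qed

end
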